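(* Let $w\in\Omega_4$ (a path with three transitions) with transition counts $\tilde x_{ij}=x_{ij}(w)$, and let $i,j,t$ be distinct elements of $\{1,2,3\}$. Then $2\tilde x_{ij}+\tilde x_{it}+\tilde x_{tj}\ge \tilde x_{ji}$. Equality holds for the paths $jiji$, $jtji$, $jiti$ (which start at $j$ and end at $i$). If $2\tilde x_{ij}+\tilde x_{it}+\tilde x_{tj}-\tilde x_{ji}=1$, then the pair (first letter, last letter) of $w$ is one of $(j,t)$, $(t,i)$, $(i,i)$, $(j,j)$, $(t,t)$. If $2\tilde x_{ij}+\tilde x_{it}+\tilde x_{tj}-\tilde x_{ji}=2$, then the pair (first letter, last letter) of $w$ is one of $(t,j)$, $(i,t)$, $(i,i)$, $(j,j)$, $(t,t)$.
   Context: $\Omega_T$ is the set of words $s_1\cdots s_T$ over $\{1,2,3\}$ with $s_l\ne s_{l+1}$ for all $l$; for $i\ne j$, $x_{ij}(w)$ is the number of $l\in\{1,\dots,T-1\}$ with $s_ls_{l+1}=ij$. *)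

theory Defs
  imports Main
begin

definition Omega :: "nat \<Rightarrow> nat list set" where
  "Omega T = {w. length w = T \<and> set w \<subseteq> {1,2,3} \<and> (\<forall>l. Suc l < T \<longrightarrow> w ! l \<noteq> w ! Suc l)}"

text \<open>Number of positions l (1 <= l <= T-1, here 0-indexed) with s_l s_{l+1} = i j.\<close>
definition xcount :: "nat \<Rightarrow> nat \<Rightarrow> nat list \<Rightarrow> nat" where
  "xcount i j w = card {l. Suc l < length w \<and> w ! l = i \<and> w ! Suc l = j}"

end

theory Submission
  imports Defs
begin

lemma xc4: "xcount i j [a,b,c,d] =
  (if a = i \<and> b = j then 1 else 0) + (if b = i \<and> c = j then 1 else 0) + (if c = i \<and> d = j then 1 else 0)"
proof -
  let ?P = "\<lambda>l. [a,b,c,d] ! l = i \<and> [a,b,c,d] ! Suc l = j"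
  have e: "{l. Suc l < length [a,b,c,d] \<and> ?P l} = {l\<in>{0,1,2}. ?P l}"
    by (auto simp: less_Suc_eq numeral_eq_Suc)
  have "card ({l\<in>{0,1,2}. ?P l}) = (\<Sum>l\<in>{0,1,2::nat}. if ?P l then 1 else 0)"
    by (subst card_eq_sum, subst sum.inter_filter[symmetric]) simp_all
  also have "\<dots> = (if a = i \<and> b = j then 1 else 0) + (if b = i \<and> c = j then 1 else 0) + (if c = i \<and> d = j then 1 else 0)"
    by (simp add: numeral_eq_Suc)
  finally show ?thesis unfolding xcount_def e .
qed

theorem lemma5:
  fixes w :: "nat list" and i j t :: nat
  assumes "w \<in> Omega 4"
    and "i \<in> {1,2,3}" and "j \<in> {1,2,3}" and "t \<in> {1,2,3}"
    and "i \<noteq> j" and "i \<noteq> t" and "j \<noteq> t"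
  shows "2 * int (xcount i j w) + int (xcount i t w) + int (xcount t j w) \<ge> int (xcount j i w)
    \<and> (w \<in> {[j,i,j,i], [j,t,j,i], [j,i,t,i]} \<longrightarrow>
           2 * int (xcount i j w) + int (xcount i t w) + int (xcount t j w) = int (xcount j i w))
    \<and> (2 * int (xcount i j w) + int (xcount i t w) + int (xcount t j w) - int (xcount j i w) = 1 \<longrightarrow>
           (hd w, last w) \<in> {(j,t), (t,i), (i,i), (j,j), (t,t)})
    \<and> (2 * int (xcount i j w) + int (xcount i t w) + int (xcount t j w) - int (xcount j i w) = 2 \<longrightarrow>
           (hd w, last w) \<in> {(t,j), (i,t), (i,i), (j,j), (t,t)})"
proof -
  from assms(1) obtain a b c d where w: "w = [a,b,c,d]"
    unfolding Omega_def
    by (auto simp: length_Suc_conv numeral_eq_Suc)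
  from assms(1) have s: "a \<in> {1,2,3}" "b \<in> {1,2,3}" "c \<in> {1,2,3}" "d \<in> {1,2,3}"
    and n: "a \<noteq> b" "b \<noteq> c" "c \<noteq> d"
    unfolding Omega_def w by (auto dest: spec[of _ 0] spec[of _ 1] spec[of _ 2])
  have ijt: "(i,j,t) \<in> {(1,2,3),(1,3,2),(2,1,3),(2,3,1),(3,1,2),(3,2,1)}"
    using assms(2-7) by auto
  have sa: "a = 1 \<or> a = 2 \<or> a = 3" and sb: "b = 1 \<or> b = 2 \<or> b = 3"
   and sc: "c = 1 \<or> c = 2 \<or> c = 3" and sd: "d = 1 \<or> d = 2 \<or> d = 3" using s by auto
  show ?thesis unfolding w xc4
    using ijt sa sb sc sd n
    apply (simp only: insert_iff empty_iff prod.inject)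
    apply (elim disjE conjE)
    apply (simp_all only: )
    apply (simp_all)
    done
qed

end
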